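(* For every integer $s\geqslant2$, \[P(B_{3,s,3})=-\sum_{\mathrm S_1,\mathrm S_2,\mathrm S_3}(-1)^{\#\mathrm S_1+\#\mathrm S_2+\#\mathrm S_3}\,2^{-|T_1|}\,4^{-|T_{2-3}|},\] where the sum is over all ordered triples of nonempty sets of pairwise distinct paths from the centre to the boundary. The sets $T_1$, $T_{2-3}$, the notation $\#\mathrm S$ and the event $B_{3,s,3}$ are defined in the context.
   Context: Consider the tiling of the plane by regular hexagons of side $1$, called cells. For an integer $s\geqslant2$, fix a cell $O$. Let $M_s$ be the set of all cells lying inside the regular hexagon that is centred at the centre of $O$, has sides of length $s\sqrt3$, and has its sides perpendicular to sides of the cells. The set $M_s$ has $m+1=1+3s(s-1)$ cells. Number the cells other than $O$ as $v_1,\dots,v_m$. Two cells are neighbours if they share a side. A cell of $M_s$ is a boundary cell if it has fewer than six neighbours in $M_s$. A path from the centre to the boundary is a sequence of pairwise distinct cells $v_{j_1},\dots,v_{j_t}$ with the following properties: - $v_{j_1}$ is a neighbour of $O$; - $v_{j_l}$ and $v_{j_{l+1}}$ are neighbours for each $l$; - $v_{j_t}$ is a boundary cell. For a nonempty set $\mathrm S=\{s_1,\dots,s_k\}$ of pairwise distinct paths, define $\#\mathrm S=k$ and $\mathrm{Cells}(\mathrm S)=s_1\cup\dots\cup s_k$, the set of cells used. For a triple $(\mathrm S_1,\mathrm S_2,\mathrm S_3)$: - $T_1$ is the set of cells belonging to exactly one of $\mathrm{Cells}(\mathrm S_1),\mathrm{Cells}(\mathrm S_2),\mathrm{Cells}(\mathrm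 S_3)$; - $T_{2-3}$ is the set of cells belonging to at least two of them. Let $\Omega_{3,s}$ be the set of triples $(f_1,f_2,f_3)$ of functions $\{v_1,\dots,v_m\}\to\{0,1\}$ with $f_1+f_2+f_3\equiv1\pmod2$ at every cell, with the uniform probability measure. Fluid $i$ flows if some path from the centre to the boundary has $f_i=1$ on all its cells. $B_{3,s,3}$ is the event that all three fluids flow. *)

theory Defs
  imports "HOL-Probability.Probability"
begin

text \<open>Hexagonal cells in axial coordinates; the cell O is (0,0).\<close>
type_synonym cell = "int \<times> int"

definition hexdist :: "cell \<Rightarrow> int" where
  "hexdist c = max \<bar>fst c\<bar> (max \<bar>snd c\<bar> \<bar>fst c + snd c\<bar>)"

definition nbr :: "cell \<Rightarrow> cell \<Rightarrow> bool" where
  "nbr a b \<longleftrightarrow> (fst a - fst b, snd a - snd b) \<in>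
     {(1,0), (-1,0), (0,1), (0,-1), (1,-1), (-1,1)}"

definition origin :: cell where "origin = (0, 0)"

definition Ms :: "nat \<Rightarrow> cell set" where
  "Ms s = {c. hexdist c \<le> int s - 1}"

definition Vs :: "nat \<Rightarrow> cell set" where
  "Vs s = Ms s - {origin}"

definition boundary :: "nat \<Rightarrow> cell set" where
  "boundary s = {c \<in> Ms s. card {d \<in> Ms s. nbr c d} < 6}"

definition paths :: "nat \<Rightarrow> cell list set" where
  "paths s = {p. p \<noteq> [] \<and> distinct p \<and> set p \<subseteq> Vs s \<and> nbr origin (hd p)
      \<and> (\<forall>i. Suc i < length p \<longrightarrow> nbr (p ! i) (p ! Suc i))
      \<and> last p \<in> boundary s}"

definition Cells :: "cell list set \<Rightarrow> cell set" where
  "Cells S = (\<Union>p\<in>S. set p)"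

definition mult3 :: "cell set \<Rightarrow> cell set \<Rightarrow> cell set \<Rightarrow> cell \<Rightarrow> nat" where
  "mult3 A B C c = of_bool (c \<in> A) + of_bool (c \<in> B) + of_bool (c \<in> C)"

definition T1 :: "cell list set \<Rightarrow> cell list set \<Rightarrow> cell list set \<Rightarrow> cell set" where
  "T1 S1 S2 S3 = {c. mult3 (Cells S1) (Cells S2) (Cells S3) c = 1}"

definition T23 :: "cell list set \<Rightarrow> cell list set \<Rightarrow> cell list set \<Rightarrow> cell set" where
  "T23 S1 S2 S3 = {c. mult3 (Cells S1) (Cells S2) (Cells S3) c \<ge> 2}"

text \<open>Omega_{3,s}: triples of 0/1-functions on v_1..v_m (extended by False outside)
  with f1 + f2 + f3 odd at every cell.\<close>
definition Omega3 :: "nat \<Rightarrow> ((cell \<Rightarrow> bool) \<times> (cell \<Rightarrow> bool) \<times> (cell \<Rightarrow> bool)) set" where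
  "Omega3 s = {(f1, f2, f3).
      (\<forall>c. c \<notin> Vs s \<longrightarrow> \<not> f1 c \<and> \<not> f2 c \<and> \<not> f3 c)
    \<and> (\<forall>c\<in>Vs s. odd (of_bool (f1 c) + of_bool (f2 c) + of_bool (f3 c) :: nat))}"

definition flows :: "nat \<Rightarrow> (cell \<Rightarrow> bool) \<Rightarrow> bool" where
  "flows s f \<longleftrightarrow> (\<exists>p\<in>paths s. \<forall>c\<in>set p. f c)"

definition B333 :: "nat \<Rightarrow> ((cell \<Rightarrow> bool) \<times> (cell \<Rightarrow> bool) \<times> (cell \<Rightarrow> bool)) set" where
  "B333 s = {(f1, f2, f3) \<in> Omega3 s. flows s f1 \<and> flows s f2 \<and> flows s f3}"

end

theory Submission
  imports Defs
begin

definition W3 :: "(bool \<times> bool \<times> bool) set" where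
  "W3 = {(True,False,False),(False,True,False),(False,False,True),(True,True,True)}"

lemma W3_iff: "(a,b,c) \<in> W3 \<longleftrightarrow> odd (of_bool a + of_bool b + of_bool c :: nat)"
  by (cases a; cases b; cases c) (auto simp: W3_def)

lemma card_filter_sum: "finite A \<Longrightarrow> real (card {x\<in>A. P x}) = (\<Sum>x\<in>A. of_bool (P x))"
  by (simp add: sum.If_cases of_bool_def Int_def)

lemma cnt_val:
  "card {w\<in>W3. (a \<longrightarrow> fst w) \<and> (b \<longrightarrow> fst (snd w)) \<and> (c \<longrightarrow> snd (snd w))}
   = (if of_bool a + of_bool b + of_bool c = (0::nat) then 4 else if of_bool a + of_bool b + of_bool c = (1::nat) then 2 else 1)"
proof -
  have "real (card {w\<in>W3. (a \<longrightarrow> fst w) \<and> (b \<longrightarrow> fst (snd w)) \<and> (c \<longrightarrow> snd (snd w))})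
     = real (if of_bool a + of_bool b + of_bool c = (0::nat) then 4 else if of_bool a + of_bool b + of_bool c = (1::nat) then 2 else 1)"
    by (subst card_filter_sum) (auto simp: W3_def)
  then show ?thesis by (simp only: of_nat_eq_iff)
qed

lemma Vs_finite: "finite (Vs s)"
proof -
  have "Vs s \<subseteq> {-int s..int s} \<times> {-int s..int s}"
    by (auto simp: Vs_def Ms_def hexdist_def)
  then show ?thesis by (rule finite_subset) auto
qed

lemma paths_finite: "finite (paths s)"
proof -
  have "paths s \<subseteq> {xs. set xs \<subseteq> Vs s \<and> distinct xs}" by (auto simp: paths_def)
  then show ?thesis using finite_subset_distinct[OF Vs_finite] finite_subset by blast
qed

definition Fm :: "cell set \<Rightarrow> (cell \<Rightarrow> bool \<times> bool \<times> bool) \<Rightarrow> (cell \<Rightarrow> bool) \<times> (cell \<Rightarrow> bool) \<times> (cell \<Rightarrow> bool)" where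
  "Fm V g = ((\<lambda>c. c \<in> V \<and> fst (g c)), (\<lambda>c. c \<in> V \<and> fst (snd (g c))), (\<lambda>c. c \<in> V \<and> snd (snd (g c))))"

definition WA :: "cell set \<Rightarrow> cell set \<Rightarrow> cell set \<Rightarrow> cell \<Rightarrow> (bool \<times> bool \<times> bool) set" where
  "WA A1 A2 A3 c = {w\<in>W3. (c\<in>A1 \<longrightarrow> fst w) \<and> (c\<in>A2 \<longrightarrow> fst (snd w)) \<and> (c\<in>A3 \<longrightarrow> snd (snd w))}"

lemma count_bij:
  fixes A1 A2 A3 :: "cell set"
  shows "bij_betw (Fm (Vs s))
     (PiE (Vs s) (WA A1 A2 A3))
     {\<omega>\<in>Omega3 s. A1 \<inter> Vs s \<subseteq> Collect (fst \<omega>) \<and> A2 \<inter> Vs s \<subseteq> Collect (fst (snd \<omega>)) \<and> A3 \<inter> Vs s \<subseteq> Collect (snd (snd \<omega>))}"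
proof (rule bij_betw_imageI)
  let ?V = "Vs s"
  show "inj_on (Fm ?V) (PiE ?V (WA A1 A2 A3))"
  proof (rule inj_onI)
    fix g h assume g: "g \<in> PiE ?V (WA A1 A2 A3)" and h: "h \<in> PiE ?V (WA A1 A2 A3)" and e: "Fm ?V g = Fm ?V h"
    show "g = h"
    proof (rule PiE_ext[OF g h])
      fix c assume "c \<in> ?V"
      from e have e1: "(\<lambda>c. c \<in> ?V \<and> fst (g c)) = (\<lambda>c. c \<in> ?V \<and> fst (h c))"
        and e2: "(\<lambda>c. c \<in> ?V \<and> fst (snd (g c))) = (\<lambda>c. c \<in> ?V \<and> fst (snd (h c)))"
        and e3: "(\<lambda>c. c \<in> ?V \<and> snd (snd (g c))) = (\<lambda>c. c \<in> ?V \<and> snd (snd (h c)))"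
        unfolding Fm_def by simp_all
      have "fst (g c) = fst (h c)" "fst (snd (g c)) = fst (snd (h c))" "snd (snd (g c)) = snd (snd (h c))"
        using fun_cong[OF e1, of c] fun_cong[OF e2, of c] fun_cong[OF e3, of c] \<open>c \<in> ?V\<close> by simp_all
      then show "g c = h c" by (simp add: prod_eq_iff)
    qed
  qed
  show "Fm ?V ` (PiE ?V (WA A1 A2 A3))
     = {\<omega>\<in>Omega3 s. A1 \<inter> ?V \<subseteq> Collect (fst \<omega>) \<and> A2 \<inter> ?V \<subseteq> Collect (fst (snd \<omega>)) \<and> A3 \<inter> ?V \<subseteq> Collect (snd (snd \<omega>))}"
  proof (intro equalityI subsetI)
    fix x assume "x \<in> Fm ?V ` PiE ?V (WA A1 A2 A3)"
    then obtain g where g: "g \<in> PiE ?V (WA A1 A2 A3)" and x: "x = Fm ?V g" by blast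
    have W: "\<And>c. c \<in> ?V \<Longrightarrow> g c \<in> W3" using g by (auto simp: WA_def)
    have "\<And>c. c \<in> ?V \<Longrightarrow> odd (of_bool (fst (g c)) + of_bool (fst (snd (g c))) + of_bool (snd (snd (g c))) :: nat)"
      using W W3_iff by (metis prod.collapse)
    then show "x \<in> {\<omega>\<in>Omega3 s. A1 \<inter> ?V \<subseteq> Collect (fst \<omega>) \<and> A2 \<inter> ?V \<subseteq> Collect (fst (snd \<omega>)) \<and> A3 \<inter> ?V \<subseteq> Collect (snd (snd \<omega>))}"
      using g unfolding x Fm_def Omega3_def WA_def by auto
  next
    fix x assume x: "x \<in> {\<omega>\<in>Omega3 s. A1 \<inter> ?V \<subseteq> Collect (fst \<omega>) \<and> A2 \<inter> ?V \<subseteq> Collect (fst (snd \<omega>)) \<and> A3 \<inter> ?V \<subseteq> Collect (snd (snd \<omega>))}"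
    obtain f1 f2 f3 where xf: "x = (f1, f2, f3)" by (cases x) auto
    define g where "g = restrict (\<lambda>c. (f1 c, f2 c, f3 c)) ?V"
    have om: "(f1, f2, f3) \<in> Omega3 s" using x xf by auto
    have "Fm ?V g = x"
      using om unfolding xf Fm_def g_def Omega3_def by (auto intro!: ext)
    moreover have "g \<in> PiE ?V (WA A1 A2 A3)"
      using om x W3_iff unfolding xf g_def Omega3_def WA_def by auto
    ultimately show "x \<in> Fm ?V ` PiE ?V (WA A1 A2 A3)" by blast
  qed
qed

lemma card_count:
  "card {\<omega>\<in>Omega3 s. A1 \<inter> Vs s \<subseteq> Collect (fst \<omega>) \<and> A2 \<inter> Vs s \<subseteq> Collect (fst (snd \<omega>)) \<and> A3 \<inter> Vs s \<subseteq> Collect (snd (snd \<omega>))}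
   = (\<Prod>c\<in>Vs s. card (WA A1 A2 A3 c))"
  using bij_betw_same_card[OF count_bij[of s A1 A2 A3]] by (simp add: card_PiE Vs_finite)

lemma card_Omega3: "card (Omega3 s) = 4 ^ card (Vs s)"
proof -
  have "Omega3 s = {\<omega>\<in>Omega3 s. {} \<inter> Vs s \<subseteq> Collect (fst \<omega>) \<and> {} \<inter> Vs s \<subseteq> Collect (fst (snd \<omega>)) \<and> {} \<inter> Vs s \<subseteq> Collect (snd (snd \<omega>))}"
    by auto
  also have "card \<dots> = (\<Prod>c\<in>Vs s. card (WA {} {} {} c))" by (rule card_count)
  also have "\<dots> = (\<Prod>c\<in>Vs s. 4)" unfolding WA_def using cnt_val[of False False False] by simp
  finally show ?thesis by simp
qed

lemma Omega3_finite: "finite (Omega3 s)" and Omega3_ne: "Omega3 s \<noteq> {}"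
proof -
  have "card (Omega3 s) \<noteq> 0" by (simp add: card_Omega3)
  then show "finite (Omega3 s)" "Omega3 s \<noteq> {}" by (auto simp: card_eq_0_iff)
qed

lemma prod_if_pow: "finite V \<Longrightarrow> T \<subseteq> V \<Longrightarrow> (\<Prod>c\<in>V. if c \<in> T then a else 1) = (a::real) ^ card T"
  by (simp add: prod.If_cases Int_absorb1 inf.absorb2)

lemma ratio:
  assumes "A1 \<subseteq> Vs s" "A2 \<subseteq> Vs s" "A3 \<subseteq> Vs s"
  shows "real (card {\<omega>\<in>Omega3 s. A1 \<subseteq> Collect (fst \<omega>) \<and> A2 \<subseteq> Collect (fst (snd \<omega>)) \<and> A3 \<subseteq> Collect (snd (snd \<omega>))}) / real (card (Omega3 s))
    = (1/2) ^ card {c. mult3 A1 A2 A3 c = 1} * (1/4) ^ card {c. mult3 A1 A2 A3 c \<ge> 2}"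
proof -
  let ?V = "Vs s"
  have i: "A1 \<inter> ?V = A1" "A2 \<inter> ?V = A2" "A3 \<inter> ?V = A3" using assms by auto
  have "card {\<omega>\<in>Omega3 s. A1 \<subseteq> Collect (fst \<omega>) \<and> A2 \<subseteq> Collect (fst (snd \<omega>)) \<and> A3 \<subseteq> Collect (snd (snd \<omega>))}
     = (\<Prod>c\<in>?V. card (WA A1 A2 A3 c))" using card_count[of s A1 A2 A3] by (simp add: i)
  then have "real (card {\<omega>\<in>Omega3 s. A1 \<subseteq> Collect (fst \<omega>) \<and> A2 \<subseteq> Collect (fst (snd \<omega>)) \<and> A3 \<subseteq> Collect (snd (snd \<omega>))}) / real (card (Omega3 s))
     = (\<Prod>c\<in>?V. real (card (WA A1 A2 A3 c))) / 4 ^ card ?V"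
    by (simp add: card_Omega3)
  also have "\<dots> = (\<Prod>c\<in>?V. real (card (WA A1 A2 A3 c)) / 4)"
    by (simp add: prod_dividef)
  also have "\<dots> = (\<Prod>c\<in>?V. (if c \<in> {c. mult3 A1 A2 A3 c = 1} then 1/2 else 1) * (if c \<in> {c. mult3 A1 A2 A3 c \<ge> 2} then 1/4 else 1))"
  proof (rule prod.cong[OF refl])
    fix c
    show "real (card (WA A1 A2 A3 c)) / 4 = (if c \<in> {c. mult3 A1 A2 A3 c = 1} then 1/2 else 1) * (if c \<in> {c. mult3 A1 A2 A3 c \<ge> 2} then 1/4 else 1)"
      unfolding WA_def cnt_val mult3_def by (cases "c \<in> A1"; cases "c \<in> A2"; cases "c \<in> A3") auto
  qed
  also have "\<dots> = (1/2) ^ card {c. mult3 A1 A2 A3 c = 1} * (1/4) ^ card {c. mult3 A1 A2 A3 c \<ge> 2}"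
  proof -
    have s1: "{c. mult3 A1 A2 A3 c = 1} \<subseteq> ?V" "{c. mult3 A1 A2 A3 c \<ge> 2} \<subseteq> ?V"
      using assms by (auto simp: mult3_def split: if_splits)
    show ?thesis by (simp only: prod.distrib prod_if_pow[OF Vs_finite s1(1)] prod_if_pow[OF Vs_finite s1(2)])
  qed
  finally show ?thesis .
qed

lemma prod_of_bool: "finite P \<Longrightarrow> (\<Prod>p\<in>P. of_bool (Q p) :: real) = of_bool (\<forall>p\<in>P. Q p)"
  by (induction P rule: finite_induct) auto

lemma flows_expand:
  "(of_bool (flows s f) :: real) = - (\<Sum>S\<in>Pow (paths s) - {{}}. (-1) ^ card S * of_bool (Cells S \<subseteq> Collect f))"
proof -
  let ?P = "paths s"
  let ?x = "\<lambda>p. (of_bool (set p \<subseteq> Collect f) :: real)"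
  have fin: "finite ?P" by (rule paths_finite)
  have "(of_bool (\<not> flows s f) :: real) = (\<Prod>p\<in>?P. of_bool (\<not> set p \<subseteq> Collect f))"
    by (subst prod_of_bool[OF fin]) (auto simp: flows_def)
  also have "\<dots> = (\<Prod>p\<in>?P. - ?x p + 1)" by (intro prod.cong) auto
  also have "\<dots> = (\<Sum>X\<in>Pow ?P. (\<Prod>p\<in>X. - ?x p) * (\<Prod>p\<in>?P - X. 1))" by (rule prod_add[OF fin])
  also have "\<dots> = (\<Sum>X\<in>Pow ?P. (-1) ^ card X * of_bool (Cells X \<subseteq> Collect f))"
  proof (rule sum.cong[OF refl])
    fix X assume "X \<in> Pow ?P"
    then have fX: "finite X" using fin finite_subset by auto
    have "(\<Prod>p\<in>X. - ?x p) = (\<Prod>p\<in>X. (-1) * ?x p)" by simp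
    also have "\<dots> = (-1) ^ card X * (\<Prod>p\<in>X. ?x p)" by (simp only: prod.distrib prod_constant)
    also have "(\<Prod>p\<in>X. ?x p) = of_bool (Cells X \<subseteq> Collect f)"
      by (subst prod_of_bool[OF fX]) (auto simp: Cells_def)
    finally show "(\<Prod>p\<in>X. - ?x p) * (\<Prod>p\<in>?P - X. 1) = (-1) ^ card X * of_bool (Cells X \<subseteq> Collect f)" by simp
  qed
  also have "\<dots> = 1 + (\<Sum>X\<in>Pow ?P - {{}}. (-1) ^ card X * of_bool (Cells X \<subseteq> Collect f))"
    using fin by (subst sum.remove[of _ "{}"]) (auto simp: Cells_def)
  finally have "(of_bool (\<not> flows s f) :: real) = 1 + (\<Sum>X\<in>Pow ?P - {{}}. (-1) ^ card X * of_bool (Cells X \<subseteq> Collect f))" .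
  then show ?thesis by (cases "flows s f") auto
qed

lemma Cells_sub: "S \<subseteq> paths s \<Longrightarrow> Cells S \<subseteq> Vs s"
  by (auto simp: Cells_def paths_def)

theorem proposition2:
  fixes s :: nat
  assumes "s \<ge> 2"
  shows "measure_pmf.prob (pmf_of_set (Omega3 s)) (B333 s) =
    - (\<Sum>(S1, S2, S3) \<in> (Pow (paths s) - {{}}) \<times> (Pow (paths s) - {{}}) \<times> (Pow (paths s) - {{}}).
        (-1) ^ (card S1 + card S2 + card S3)
        * (1/2) ^ card (T1 S1 S2 S3) * (1/4) ^ card (T23 S1 S2 S3) :: real)"
proof -
  let ?O = "Omega3 s"
  let ?Q = "Pow (paths s) - {{}}"
  let ?g = "\<lambda>S f. (-1) ^ card S * (of_bool (Cells S \<subseteq> Collect f) :: real)"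
  have finO: "finite ?O" and neO: "?O \<noteq> {}" by (rule Omega3_finite, rule Omega3_ne)
  have finQ: "finite ?Q" using paths_finite by simp
  have "measure_pmf.prob (pmf_of_set ?O) (B333 s) = real (card (?O \<inter> B333 s)) / real (card ?O)"
    by (rule measure_pmf_of_set[OF neO finO])
  also have "?O \<inter> B333 s = {\<omega>\<in>?O. flows s (fst \<omega>) \<and> flows s (fst (snd \<omega>)) \<and> flows s (snd (snd \<omega>))}"
    by (auto simp: B333_def)
  also have "real (card \<dots>) = (\<Sum>\<omega>\<in>?O. of_bool (flows s (fst \<omega>)) * of_bool (flows s (fst (snd \<omega>))) * of_bool (flows s (snd (snd \<omega>))))"
    by (subst card_filter_sum[OF finO]) (auto intro!: sum.cong)
  also have "\<dots> = (\<Sum>\<omega>\<in>?O. - (\<Sum>(S1, S2, S3) \<in> ?Q \<times> ?Q \<times> ?Q. ?g S1 (fst \<omega>) * ?g S2 (fst (snd \<omega>)) * ?g S3 (snd (snd \<omega>))))"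
  proof (rule sum.cong[OF refl])
    fix \<omega> :: "(cell \<Rightarrow> bool) \<times> (cell \<Rightarrow> bool) \<times> (cell \<Rightarrow> bool)"
    show "of_bool (flows s (fst \<omega>)) * of_bool (flows s (fst (snd \<omega>))) * of_bool (flows s (snd (snd \<omega>))) =
      - (\<Sum>(S1, S2, S3) \<in> ?Q \<times> ?Q \<times> ?Q. ?g S1 (fst \<omega>) * ?g S2 (fst (snd \<omega>)) * ?g S3 (snd (snd \<omega>)))"
    proof -
      have "of_bool (flows s (fst \<omega>)) * of_bool (flows s (fst (snd \<omega>))) * of_bool (flows s (snd (snd \<omega>)))
        = - ((\<Sum>S1\<in>?Q. ?g S1 (fst \<omega>)) * (\<Sum>S2\<in>?Q. ?g S2 (fst (snd \<omega>))) * (\<Sum>S3\<in>?Q. ?g S3 (snd (snd \<omega>))))"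
        unfolding flows_expand[of s] by simp
      also have "(\<Sum>S1\<in>?Q. ?g S1 (fst \<omega>)) * (\<Sum>S2\<in>?Q. ?g S2 (fst (snd \<omega>))) * (\<Sum>S3\<in>?Q. ?g S3 (snd (snd \<omega>)))
         = (\<Sum>S1\<in>?Q. \<Sum>S2\<in>?Q. \<Sum>S3\<in>?Q. ?g S1 (fst \<omega>) * ?g S2 (fst (snd \<omega>)) * ?g S3 (snd (snd \<omega>)))"
        apply (unfold sum_product)
        apply (unfold sum_distrib_right)
        apply (rule sum.cong[OF refl])
        apply (rule sum.swap)
        done
      also have "\<dots> = (\<Sum>(S1, S2, S3) \<in> ?Q \<times> ?Q \<times> ?Q. ?g S1 (fst \<omega>) * ?g S2 (fst (snd \<omega>)) * ?g S3 (snd (snd \<omega>)))"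
        by (simp only: sum.cartesian_product)
      finally show ?thesis .
    qed
  qed
  also have "\<dots> = - (\<Sum>(S1, S2, S3) \<in> ?Q \<times> ?Q \<times> ?Q. (\<Sum>\<omega>\<in>?O. ?g S1 (fst \<omega>) * ?g S2 (fst (snd \<omega>)) * ?g S3 (snd (snd \<omega>))))"
    by (simp add: sum_negf sum.swap[of _ ?O] case_prod_beta)
  finally have eq: "measure_pmf.prob (pmf_of_set ?O) (B333 s) = - (\<Sum>(S1, S2, S3) \<in> ?Q \<times> ?Q \<times> ?Q. (\<Sum>\<omega>\<in>?O. ?g S1 (fst \<omega>) * ?g S2 (fst (snd \<omega>)) * ?g S3 (snd (snd \<omega>)))) / real (card ?O)" .
  have key: "(\<Sum>\<omega>\<in>?O. ?g S1 (fst \<omega>) * ?g S2 (fst (snd \<omega>)) * ?g S3 (snd (snd \<omega>))) / real (card ?O)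
       = (-1) ^ (card S1 + card S2 + card S3) * (1/2) ^ card (T1 S1 S2 S3) * (1/4) ^ card (T23 S1 S2 S3)"
    if S: "S1 \<in> ?Q" "S2 \<in> ?Q" "S3 \<in> ?Q" for S1 S2 S3
  proof -
    have "(\<Sum>\<omega>\<in>?O. ?g S1 (fst \<omega>) * ?g S2 (fst (snd \<omega>)) * ?g S3 (snd (snd \<omega>)))
      = (-1) ^ (card S1 + card S2 + card S3) * (\<Sum>\<omega>\<in>?O. of_bool (Cells S1 \<subseteq> Collect (fst \<omega>) \<and> Cells S2 \<subseteq> Collect (fst (snd \<omega>)) \<and> Cells S3 \<subseteq> Collect (snd (snd \<omega>))))"
      by (simp add: sum_distrib_left power_add mult_ac of_bool_conj)
    also have "(\<Sum>\<omega>\<in>?O. of_bool (Cells S1 \<subseteq> Collect (fst \<omega>) \<and> Cells S2 \<subseteq> Collect (fst (snd \<omega>)) \<and> Cells S3 \<subseteq> Collect (snd (snd \<omega>))) :: real)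
      = real (card {\<omega>\<in>?O. Cells S1 \<subseteq> Collect (fst \<omega>) \<and> Cells S2 \<subseteq> Collect (fst (snd \<omega>)) \<and> Cells S3 \<subseteq> Collect (snd (snd \<omega>))})"
      by (rule card_filter_sum[OF finO, symmetric])
    finally have "(\<Sum>\<omega>\<in>?O. ?g S1 (fst \<omega>) * ?g S2 (fst (snd \<omega>)) * ?g S3 (snd (snd \<omega>))) / real (card ?O)
       = (-1) ^ (card S1 + card S2 + card S3) * (real (card {\<omega>\<in>?O. Cells S1 \<subseteq> Collect (fst \<omega>) \<and> Cells S2 \<subseteq> Collect (fst (snd \<omega>)) \<and> Cells S3 \<subseteq> Collect (snd (snd \<omega>))}) / real (card ?O))"
      by simp
    also have "\<dots> = (-1) ^ (card S1 + card S2 + card S3) * ((1/2) ^ card (T1 S1 S2 S3) * (1/4) ^ card (T23 S1 S2 S3))"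
    proof -
      have sub: "S1 \<subseteq> paths s" "S2 \<subseteq> paths s" "S3 \<subseteq> paths s" using S by auto
      show ?thesis
        using ratio[OF Cells_sub[OF sub(1)] Cells_sub[OF sub(2)] Cells_sub[OF sub(3)]]
        unfolding T1_def T23_def by simp
    qed
    finally show ?thesis by simp
  qed
  show ?thesis
    unfolding eq minus_divide_left[symmetric] sum_divide_distrib
  proof (intro arg_cong[where f = uminus] sum.cong refl)
    fix x assume "x \<in> ?Q \<times> ?Q \<times> ?Q"
    then obtain S1 S2 S3 where x: "x = (S1, S2, S3)" and S: "S1 \<in> ?Q" "S2 \<in> ?Q" "S3 \<in> ?Q" by auto
    show "(case x of (S1, S2, S3) \<Rightarrow> (\<Sum>\<omega>\<in>?O. ?g S1 (fst \<omega>) * ?g S2 (fst (snd \<omega>)) * ?g S3 (snd (snd \<omega>)))) / real (card ?O)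
       = (case x of (S1, S2, S3) \<Rightarrow> (-1) ^ (card S1 + card S2 + card S3) * (1/2) ^ card (T1 S1 S2 S3) * (1/4) ^ card (T23 S1 S2 S3))"
      unfolding x using key[OF S] by simp
  qed
qed

end
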